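(* Let $K=3$ and let $l>s$ be nonnegative integers. Then \[ h(l,\,l,\,s+1)\ \ge\ h(l+1,\,l,\,s). \]
   Context: For a vector $\vec n=(n_1,n_2,n_3)$ of nonnegative integers, the following random process is run: stocks start at $\vec n^{(0)}=\vec n$; at each step $t=1,2,\dots$, as long as at least two coordinates of $\vec n^{(t-1)}$ are nonzero, an index $i$ is chosen uniformly at random (independently of the past) among the indices with $n_i^{(t-1)}>0$, and $\vec n^{(t)}=\vec n^{(t-1)}-\vec e_i$ ($\vec e_i$ the $i$-th standard unit vector). The process stops at the first time $T$ at which at most one coordinate is nonzero, and $h(\vec n)=\mathbb{E}[T]$. Equivalently, with $\operatorname{support}(\vec n)=\{i:n_i\ne 0\}$: $h(\vec n)=0$ if $|\operatorname{support}(\vec n)|\le1$, and otherwise $h(\vec n)=1+\frac{1}{|\operatorname{support}(\vec n)|}\sum_{i\in\operatorname{support}(\vec n)}h(\vec n-\vec e_i)$. *)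

theory Defs
  imports Complex_Main
begin

definition coord3 :: "nat \<times> nat \<times> nat \<Rightarrow> nat \<Rightarrow> nat" where
  "coord3 n i = (case n of (a, b, c) \<Rightarrow> if i = 0 then a else if i = 1 then b else c)"

definition supp3 :: "nat \<times> nat \<times> nat \<Rightarrow> nat set" where
  "supp3 n = {i \<in> {0, 1, 2}. coord3 n i \<noteq> 0}"

definition dec3 :: "nat \<times> nat \<times> nat \<Rightarrow> nat \<Rightarrow> nat \<times> nat \<times> nat" where
  "dec3 n i = (case n of (a, b, c) \<Rightarrow>
     if i = 0 then (a - 1, b, c) else if i = 1 then (a, b - 1, c) else (a, b, c - 1))"

function h :: "nat \<times> nat \<times> nat \<Rightarrow> real" where
  "h n = (if card (supp3 n) \<le> 1 then 0
          else 1 + (1 / real (card (supp3 n))) * (\<Sum>i\<in>supp3 n. h (dec3 n i)))"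
  by pat_completeness auto
termination
proof (relation "measure (\<lambda>(a, b, c). a + b + c)")
  show "wf (measure (\<lambda>(a, b, c). a + b + c))" by simp
next
  fix n :: "nat \<times> nat \<times> nat" and i
  assume "\<not> card (supp3 n) \<le> 1" "i \<in> supp3 n"
  then show "(dec3 n i, n) \<in> measure (\<lambda>(a, b, c). a + b + c)"
    by (cases n) (auto simp: supp3_def coord3_def dec3_def split: if_splits)
qed

end

theory Submission imports Defs begin

declare h.simps[simp del]

lemma h3: "h (Suc a, Suc b, Suc c) = 1 + (h (a, Suc b, Suc c) + h (Suc a, b, Suc c) + h (Suc a, Suc b, c)) / 3"
proof -
  have s: "supp3 (Suc a, Suc b, Suc c) = {0,1,2}" by (auto simp: supp3_def coord3_def)
  show ?thesis by (subst h.simps) (simp add: s dec3_def)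
qed

lemma h2ab: "h (Suc a, Suc b, 0) = 1 + (h (a, Suc b, 0) + h (Suc a, b, 0)) / 2"
proof -
  have s: "supp3 (Suc a, Suc b, 0) = {0,1}" by (auto simp: supp3_def coord3_def)
  show ?thesis by (subst h.simps) (simp add: s dec3_def)
qed

lemma h2ac: "h (Suc a, 0, Suc c) = 1 + (h (a, 0, Suc c) + h (Suc a, 0, c)) / 2"
proof -
  have s: "supp3 (Suc a, 0, Suc c) = {0,2}" by (auto simp: supp3_def coord3_def)
  show ?thesis by (subst h.simps) (simp add: s dec3_def)
qed

lemma h2bc: "h (0, Suc b, Suc c) = 1 + (h (0, b, Suc c) + h (0, Suc b, c)) / 2"
proof -
  have s: "supp3 (0, Suc b, Suc c) = {1,2}" by (auto simp: supp3_def coord3_def)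
  show ?thesis by (subst h.simps) (simp add: s dec3_def)
qed

lemma h1: "h (a, 0, 0) = 0" "h (0, b, 0) = 0" "h (0, 0, c) = 0"
proof -
  have "card (supp3 (a,0,0)) \<le> 1" by (rule order_trans[OF card_mono[of "{0}"]]) (auto simp: supp3_def coord3_def)
  then show "h (a, 0, 0) = 0" by (subst h.simps) simp
  have "card (supp3 (0,b,0)) \<le> 1" by (rule order_trans[OF card_mono[of "{1}"]]) (auto simp: supp3_def coord3_def)
  then show "h (0, b, 0) = 0" by (subst h.simps) simp
  have "card (supp3 (0,0,c)) \<le> 1" by (rule order_trans[OF card_mono[of "{2}"]]) (auto simp: supp3_def coord3_def)
  then show "h (0, 0, c) = 0" by (subst h.simps) simp
qed

lemma h_nonneg: "h n \<ge> 0"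
proof (induction n rule: h.induct)
  case (1 n)
  show ?case
  proof (cases "card (supp3 n) \<le> 1")
    case True then show ?thesis by (subst h.simps) simp
  next
    case False
    have "(\<Sum>i\<in>supp3 n. h (dec3 n i)) \<ge> 0" by (rule sum_nonneg) (use 1 False in auto)
    then show ?thesis using False by (subst h.simps) simp
  qed
qed

lemma sym12: "h (a, b, c) = h (b, a, c)"
proof (induction "a+b+c" arbitrary: a b c rule: less_induct)
  case less
  note IH = less
  show ?case
  proof (cases a)
    case 0 then show ?thesis
    proof (cases b)
      case 0 then show ?thesis using \<open>a=0\<close> by (simp add: h1)
    next
      case (Suc b')
      then show ?thesis using \<open>a=0\<close>
      proof (cases c)
        case 0 then show ?thesis using \<open>a=0\<close> by (simp add: h1)
      next
        case (Suc c')
        have "h (b', 0, Suc c') = h (0, b', Suc c')" by (rule IH) (simp add: \<open>a=0\<close> \<open>b=Suc b'\<close> Suc)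
        moreover have "h (Suc b', 0, c') = h (0, Suc b', c')" by (rule IH) (simp add: \<open>a=0\<close> \<open>b=Suc b'\<close> Suc)
        ultimately show ?thesis using \<open>a=0\<close> \<open>b=Suc b'\<close> Suc by (simp add: h2ac h2bc)
      qed
    qed
  next
    case (Suc a')
    show ?thesis
    proof (cases b)
      case 0
      show ?thesis
      proof (cases c)
        case 0 then show ?thesis using \<open>b=0\<close> Suc by (simp add: h1)
      next
        case (Suc c')
        have "h (0, a', Suc c') = h (a', 0, Suc c')" by (rule IH) (simp add: \<open>a=Suc a'\<close> \<open>b=0\<close> Suc)
        moreover have "h (0, Suc a', c') = h (Suc a', 0, c')" by (rule IH) (simp add: \<open>a=Suc a'\<close> \<open>b=0\<close> Suc)
        ultimately show ?thesis using \<open>a=Suc a'\<close> \<open>b=0\<close> Suc by (simp add: h2ac h2bc)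
      qed
    next
      case (Suc b')
      show ?thesis
      proof (cases c)
        case 0
        have "h (a', Suc b', 0) = h (Suc b', a', 0)" by (rule IH) (simp add: \<open>a=Suc a'\<close> \<open>b=Suc b'\<close> 0)
        moreover have "h (Suc a', b', 0) = h (b', Suc a', 0)" by (rule IH) (simp add: \<open>a=Suc a'\<close> \<open>b=Suc b'\<close> 0)
        ultimately show ?thesis using \<open>a=Suc a'\<close> \<open>b=Suc b'\<close> 0 by (simp add: h2ab)
      next
        case (Suc c')
        have "h (a', Suc b', Suc c') = h (Suc b', a', Suc c')" by (rule IH) (simp add: \<open>a=Suc a'\<close> \<open>b=Suc b'\<close> Suc)
        moreover have "h (Suc a', b', Suc c') = h (b', Suc a', Suc c')" by (rule IH) (simp add: \<open>a=Suc a'\<close> \<open>b=Suc b'\<close> Suc)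
        moreover have "h (Suc a', Suc b', c') = h (Suc b', Suc a', c')" by (rule IH) (simp add: \<open>a=Suc a'\<close> \<open>b=Suc b'\<close> Suc)
        ultimately show ?thesis using \<open>a=Suc a'\<close> \<open>b=Suc b'\<close> Suc by (simp add: h3)
      qed
    qed
  qed
qed

lemma sym23: "h (a, b, c) = h (a, c, b)"
proof (induction "a+b+c" arbitrary: a b c rule: less_induct)
  case less
  note IH = less
  show ?case
  proof (cases b)
    case 0 then show ?thesis
    proof (cases c)
      case 0 then show ?thesis using \<open>b=0\<close> by (simp add: h1)
    next
      case (Suc c')
      then show ?thesis using \<open>b=0\<close>
      proof (cases a)
        case 0 then show ?thesis using \<open>b=0\<close> by (simp add: h1)
      next
        case (Suc a')
        have "h (a', 0, Suc c') = h (a', Suc c', 0)" by (rule IH) (simp add: \<open>b=0\<close> \<open>c=Suc c'\<close> Suc)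
        moreover have "h (Suc a', 0, c') = h (Suc a', c', 0)" by (rule IH) (simp add: \<open>b=0\<close> \<open>c=Suc c'\<close> Suc)
        ultimately show ?thesis using \<open>b=0\<close> \<open>c=Suc c'\<close> Suc by (simp add: h2ac h2ab)
      qed
    qed
  next
    case (Suc b')
    show ?thesis
    proof (cases c)
      case 0
      show ?thesis
      proof (cases a)
        case 0 then show ?thesis using \<open>c=0\<close> Suc by (simp add: h1)
      next
        case (Suc a')
        have "h (a', Suc b', 0) = h (a', 0, Suc b')" by (rule IH) (simp add: \<open>b=Suc b'\<close> \<open>c=0\<close> Suc)
        moreover have "h (Suc a', b', 0) = h (Suc a', 0, b')" by (rule IH) (simp add: \<open>b=Suc b'\<close> \<open>c=0\<close> Suc)
        ultimately show ?thesis using \<open>b=Suc b'\<close> \<open>c=0\<close> Suc by (simp add: h2ac h2ab)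
      qed
    next
      case (Suc c')
      show ?thesis
      proof (cases a)
        case 0
        have "h (0, b', Suc c') = h (0, Suc c', b')" by (rule IH) (simp add: \<open>b=Suc b'\<close> \<open>c=Suc c'\<close> 0)
        moreover have "h (0, Suc b', c') = h (0, c', Suc b')" by (rule IH) (simp add: \<open>b=Suc b'\<close> \<open>c=Suc c'\<close> 0)
        ultimately show ?thesis using \<open>b=Suc b'\<close> \<open>c=Suc c'\<close> 0 by (simp add: h2bc)
      next
        case (Suc a')
        have "h (a', Suc b', Suc c') = h (a', Suc c', Suc b')" by (rule IH) (simp add: \<open>b=Suc b'\<close> \<open>c=Suc c'\<close> Suc)
        moreover have "h (Suc a', b', Suc c') = h (Suc a', Suc c', b')" by (rule IH) (simp add: \<open>b=Suc b'\<close> \<open>c=Suc c'\<close> Suc)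
        moreover have "h (Suc a', Suc b', c') = h (Suc a', c', Suc b')" by (rule IH) (simp add: \<open>b=Suc b'\<close> \<open>c=Suc c'\<close> Suc)
        ultimately show ?thesis using \<open>b=Suc b'\<close> \<open>c=Suc c'\<close> Suc by (simp add: h3)
      qed
    qed
  qed
qed

lemma sym13: "h (a, b, c) = h (c, b, a)"
  by (metis sym12 sym23)

lemma BAL: "a < b \<Longrightarrow> h (a, Suc b, 0) \<le> h (Suc a, b, 0)"
proof (induction "a+b" arbitrary: a b rule: less_induct)
  case less
  show ?case
  proof (cases a)
    case 0 then show ?thesis by (simp add: h1 h_nonneg)
  next
    case (Suc a')
    then obtain b' where b: "b = Suc b'" using less.prems by (cases b) auto
    have e1: "h (Suc a', Suc (Suc b'), 0) = 1 + (h (a', Suc (Suc b'), 0) + h (Suc a', Suc b', 0)) / 2"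
      by (rule h2ab)
    have e2: "h (Suc (Suc a'), Suc b', 0) = 1 + (h (Suc a', Suc b', 0) + h (Suc (Suc a'), b', 0)) / 2"
      by (rule h2ab)
    have i1: "h (a', Suc (Suc b'), 0) \<le> h (Suc a', Suc b', 0)"
      using less.hyps[of a' "Suc b'"] less.prems Suc b by simp
    have i2: "h (Suc a', Suc b', 0) \<le> h (Suc (Suc a'), b', 0)"
    proof (cases "Suc a' < b'")
      case True then show ?thesis using less.hyps[of "Suc a'" b'] Suc b by simp
    next
      case False
      then have "b' = Suc a'" using less.prems Suc b by simp
      then show ?thesis using sym12[of "Suc a'" "Suc (Suc a')" 0] by simp
    qed
    show ?thesis using e1 e2 i1 i2 Suc b by simp
  qed
qed

lemma g1: "h (1, q, 0) = 2 - 2 / 2^q"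
proof (induction q)
  case 0 then show ?case by (simp add: h1)
next
  case (Suc q)
  have "h (Suc 0, Suc q, 0) = 1 + (h (0, Suc q, 0) + h (Suc 0, q, 0)) / 2" by (rule h2ab)
  then have "h (1, Suc q, 0) = 1 + h (1, q, 0) / 2" by (simp add: h1)
  also have "\<dots> = 1 + (2 - 2 / 2^q) / 2" using Suc.IH by simp
  also have "\<dots> = 2 - 2 / 2^(Suc q)" by (simp add: field_simps)
  finally show ?case .
qed

lemma g2: "h (2, q, 0) = 4 - (real q + 4) / 2^q"
proof (induction q)
  case 0 then show ?case by (simp add: h1)
next
  case (Suc q)
  have "h (Suc 1, Suc q, 0) = 1 + (h (1, Suc q, 0) + h (Suc 1, q, 0)) / 2" by (rule h2ab)
  then have "h (2, Suc q, 0) = 1 + (h (1, Suc q, 0) + h (2, q, 0)) / 2" by (simp add: numeral_2_eq_2)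
  also have "\<dots> = 1 + ((2 - 2 / 2^(Suc q)) + (4 - (q + 4) / 2^q)) / 2" using Suc.IH g1[of "Suc q"] by simp
  also have "\<dots> = 4 - (real (Suc q) + 4) / 2^(Suc q)" by (simp add: field_simps)
  finally show ?case .
qed

lemma Elem: "h (2, q, 0) \<le> 2 * h (1, Suc q, 0)"
proof -
  have "(2::real) \<le> real q + 4" by simp
  then have d: "(2::real) / 2^q \<le> (real q + 4) / 2^q" by (simp add: divide_right_mono)
  have "h (2, q, 0) = 4 - (real q + 4) / 2^q" by (rule g2)
  moreover have "h (1, Suc q, 0) = 2 - 2 / 2^(Suc q)" by (rule g1)
  moreover have "(2::real) / 2^(Suc q) = 1 / 2^q" by simp
  ultimately show ?thesis using d by simp
qed

lemma AC: "h (Suc (Suc p), q, 0) + h (p, Suc (Suc q), 0) \<le> 2 * h (Suc p, Suc q, 0)"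
proof (induction "p+q" arbitrary: p q rule: less_induct)
  case less
  show ?case
  proof (cases p)
    case 0 then show ?thesis using Elem[of q] by (simp add: h1 numeral_2_eq_2)
  next
    case (Suc p')
    show ?thesis
    proof (cases q)
      case 0
      have "h (p, 2, 0) \<le> 2 * h (1, Suc p, 0)" using Elem[of p] sym12[of p 2 0] by simp
      then show ?thesis using 0 sym12[of "Suc p" "Suc 0" 0] by (simp add: h1 numeral_2_eq_2)
    next
      case (Suc q')
      have e1: "h (Suc (Suc (Suc p')), Suc q', 0) = 1 + (h (Suc (Suc p'), Suc q', 0) + h (Suc (Suc (Suc p')), q', 0)) / 2"
        by (rule h2ab)
      have e2: "h (Suc p', Suc (Suc (Suc q')), 0) = 1 + (h (p', Suc (Suc (Suc q')), 0) + h (Suc p', Suc (Suc q'), 0)) / 2"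
        by (rule h2ab)
      have e3: "h (Suc (Suc p'), Suc (Suc q'), 0) = 1 + (h (Suc p', Suc (Suc q'), 0) + h (Suc (Suc p'), Suc q', 0)) / 2"
        by (rule h2ab)
      have i1: "h (Suc (Suc p'), Suc q', 0) + h (p', Suc (Suc (Suc q')), 0) \<le> 2 * h (Suc p', Suc (Suc q'), 0)"
        using less.hyps[of p' "Suc q'"] \<open>p = Suc p'\<close> Suc by simp
      have i2: "h (Suc (Suc (Suc p')), q', 0) + h (Suc p', Suc (Suc q'), 0) \<le> 2 * h (Suc (Suc p'), Suc q', 0)"
        using less.hyps[of "Suc p'" q'] \<open>p = Suc p'\<close> Suc by simp
      show ?thesis unfolding \<open>p = Suc p'\<close> Suc using e1 e2 e3 i1 i2 by argo
    qed
  qed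
qed

lemma B1: "h (Suc p, q, 0) + h (p, Suc q, 0) \<le> 2 * h (p, q, 1)"
proof (induction "p+q" arbitrary: p q rule: less_induct)
  case less
  show ?case
  proof (cases p)
    case 0
    have "h (0, q, 1) = h (1, q, 0)" by (metis sym12 sym23)
    then show ?thesis using 0 h_nonneg[of "(1, q, 0)"] by (simp add: h1)
  next
    case (Suc p')
    show ?thesis
    proof (cases q)
      case 0
      have "h (p, 0, 1) = h (p, 1, 0)" by (metis sym23)
      then show ?thesis using 0 h_nonneg[of "(p, 1, 0)"] by (simp add: h1)
    next
      case (Suc q')
      have e1: "h (Suc p', Suc q', 1) = 1 + (h (p', Suc q', 1) + h (Suc p', q', 1) + h (Suc p', Suc q', 0)) / 3"
        using h3[of p' q' 0] by simp
      have e2: "h (Suc (Suc p'), Suc q', 0) = 1 + (h (Suc p', Suc q', 0) + h (Suc (Suc p'), q', 0)) / 2"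
        by (rule h2ab)
      have e3: "h (Suc p', Suc (Suc q'), 0) = 1 + (h (p', Suc (Suc q'), 0) + h (Suc p', Suc q', 0)) / 2"
        by (rule h2ab)
      have i1: "h (Suc p', Suc q', 0) + h (p', Suc (Suc q'), 0) \<le> 2 * h (p', Suc q', 1)"
        using less.hyps[of p' "Suc q'"] \<open>p = Suc p'\<close> Suc by simp
      have i2: "h (Suc (Suc p'), q', 0) + h (Suc p', Suc q', 0) \<le> 2 * h (Suc p', q', 1)"
        using less.hyps[of "Suc p'" q'] \<open>p = Suc p'\<close> Suc by simp
      have ac: "h (Suc (Suc p'), q', 0) + h (p', Suc (Suc q'), 0) \<le> 2 * h (Suc p', Suc q', 0)"
        by (rule AC)
      show ?thesis unfolding \<open>p = Suc p'\<close> Suc using e1 e2 e3 i1 i2 ac by argo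
    qed
  qed
qed

lemma B2: "p \<le> q \<Longrightarrow> 2 * h (p, Suc q, 0) \<le> h (Suc p, q, 0) + h (p, q, 1)"
proof (induction "p+q" arbitrary: p q rule: less_induct)
  case less
  show ?case
  proof (cases p)
    case 0 then show ?thesis using h_nonneg[of "(Suc p, q, 0)"] h_nonneg[of "(p, q, 1)"] by (simp add: h1)
  next
    case (Suc p')
    then obtain q' where q: "q = Suc q'" using less.prems by (cases q) auto
    show ?thesis
    proof (cases "p = q")
      case True
      then have pq: "p' = q'" using Suc q by simp
      have e1: "h (Suc p', Suc p', 1) = 1 + (h (p', Suc p', 1) + h (Suc p', p', 1) + h (Suc p', Suc p', 0)) / 3"
        using h3[of p' p' 0] by simp
      have e2: "h (Suc p', Suc (Suc p'), 0) = 1 + (h (p', Suc (Suc p'), 0) + h (Suc p', Suc p', 0)) / 2"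
        by (rule h2ab)
      have s1: "h (Suc p', p', 1) = h (p', Suc p', 1)" by (rule sym12)
      have s2: "h (Suc (Suc p'), Suc p', 0) = h (Suc p', Suc (Suc p'), 0)" by (rule sym12)
      have b1: "h (Suc p', Suc p', 0) + h (p', Suc (Suc p'), 0) \<le> 2 * h (p', Suc p', 1)" by (rule B1)
      have bal: "h (p', Suc (Suc p'), 0) \<le> h (Suc p', Suc p', 0)" by (rule BAL) simp
      show ?thesis unfolding Suc q pq[symmetric] using e1 e2 s1 s2 b1 bal by argo
    next
      case False
      then have lt: "Suc p' \<le> q'" using Suc q less.prems by simp
      have e1: "h (Suc (Suc p'), Suc q', 0) = 1 + (h (Suc p', Suc q', 0) + h (Suc (Suc p'), q', 0)) / 2"
        by (rule h2ab)
      have e2: "h (Suc p', Suc q', 1) = 1 + (h (p', Suc q', 1) + h (Suc p', q', 1) + h (Suc p', Suc q', 0)) / 3"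
        using h3[of p' q' 0] by simp
      have e3: "h (Suc p', Suc (Suc q'), 0) = 1 + (h (p', Suc (Suc q'), 0) + h (Suc p', Suc q', 0)) / 2"
        by (rule h2ab)
      have i1: "2 * h (p', Suc (Suc q'), 0) \<le> h (Suc p', Suc q', 0) + h (p', Suc q', 1)"
        using less.hyps[of p' "Suc q'"] Suc q lt by simp
      have i2: "2 * h (Suc p', Suc q', 0) \<le> h (Suc (Suc p'), q', 0) + h (Suc p', q', 1)"
        using less.hyps[of "Suc p'" q'] Suc q lt by simp
      have bal1: "h (p', Suc (Suc q'), 0) \<le> h (Suc p', Suc q', 0)" by (rule BAL) (use lt in simp)
      have bal2: "h (Suc p', Suc q', 0) \<le> h (Suc (Suc p'), q', 0)"
      proof (cases "Suc p' < q'")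
        case True then show ?thesis by (rule BAL)
      next
        case False
        then have "q' = Suc p'" using lt by simp
        then show ?thesis using sym12[of "Suc p'" "Suc (Suc p')" 0] by simp
      qed
      show ?thesis unfolding Suc q using e1 e2 e3 i1 i2 bal1 bal2 by argo
    qed
  qed
qed

definition G :: "nat \<Rightarrow> nat \<Rightarrow> nat \<Rightarrow> real" where
  "G x y z = 2 * h (x, y, Suc z) - h (Suc x, y, z) - h (x, Suc y, z)"

lemma G_rec: "G (Suc x) (Suc y) (Suc z) = (G x (Suc y) (Suc z) + G (Suc x) y (Suc z) + G (Suc x) (Suc y) z) / 3"
proof -
  have e1: "h (Suc x, Suc y, Suc (Suc z)) = 1 + (h (x, Suc y, Suc (Suc z)) + h (Suc x, y, Suc (Suc z)) + h (Suc x, Suc y, Suc z)) / 3"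
    by (rule h3)
  have e2: "h (Suc (Suc x), Suc y, Suc z) = 1 + (h (Suc x, Suc y, Suc z) + h (Suc (Suc x), y, Suc z) + h (Suc (Suc x), Suc y, z)) / 3"
    by (rule h3)
  have e3: "h (Suc x, Suc (Suc y), Suc z) = 1 + (h (x, Suc (Suc y), Suc z) + h (Suc x, Suc y, Suc z) + h (Suc x, Suc (Suc y), z)) / 3"
    by (rule h3)
  show ?thesis unfolding G_def using e1 e2 e3 by argo
qed

lemma G_T0: "G x x x = 0"
  unfolding G_def using sym13[of x x "Suc x"] sym23[of x "Suc x" x] by simp

lemma G_T1: "G x y x = - G x x y / 2"
  unfolding G_def using sym13[of x y "Suc x"] sym23[of x "Suc y" x] sym23[of "Suc x" x y] sym23[of x "Suc x" y]
  by argo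

lemma G_T2: "G x y y = - G y y x / 2"
  unfolding G_def using sym23[of x "Suc y" y] sym13[of y y "Suc x"] sym13[of "Suc y" y x] sym13[of y "Suc y" x]
  by argo

lemma main: "x + y + z = n \<Longrightarrow> (z \<le> x \<and> z \<le> y \<longrightarrow> 0 \<le> G x y z) \<and> (x \<le> z \<and> y \<le> z \<longrightarrow> G x y z \<le> 0)"
proof (induction n arbitrary: x y z rule: less_induct)
  case (less n)
  have IH1: "0 \<le> G x y z" if "x + y + z < n" "z \<le> x" "z \<le> y" for x y z
    using less.IH[of "x+y+z" x y z] that by simp
  have IH2: "G x y z \<le> 0" if "x + y + z < n" "x \<le> z" "y \<le> z" for x y z
    using less.IH[of "x+y+z" x y z] that by simp
  have SI: "0 \<le> G x y z" if asm: "x + y + z = n" "z < x" "z < y" for x y z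
  proof (cases z)
    case 0
    have "h (Suc x, y, 0) + h (x, Suc y, 0) \<le> 2 * h (x, y, 1)" by (rule B1)
    then show ?thesis unfolding G_def 0 by simp
  next
    case (Suc z')
    obtain x' where x: "x = Suc x'" using asm Suc by (cases x) auto
    obtain y' where y: "y = Suc y'" using asm Suc by (cases y) auto
    have "0 \<le> G x' (Suc y') (Suc z')" by (rule IH1) (use asm x y Suc in auto)
    moreover have "0 \<le> G (Suc x') y' (Suc z')" by (rule IH1) (use asm x y Suc in auto)
    moreover have "0 \<le> G (Suc x') (Suc y') z'" by (rule IH1) (use asm x y Suc in auto)
    ultimately show ?thesis unfolding x y Suc G_rec by simp
  qed
  have SII: "G x y z \<le> 0" if asm: "x + y + z = n" "x < z" "y < z" for x y z
  proof (cases "x = 0")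
    case True
    show ?thesis
    proof (cases "y = 0")
      case True
      then show ?thesis using \<open>x = 0\<close> h_nonneg[of "(1, 0, z)"] h_nonneg[of "(0, 1, z)"]
        unfolding G_def by (simp add: h1)
    next
      case False
      have b: "2 * h (y, Suc z, 0) \<le> h (Suc y, z, 0) + h (y, z, 1)" by (rule B2) (use asm in simp)
      have "h (0, y, Suc z) = h (y, Suc z, 0)" by (metis sym12 sym23)
      moreover have "h (1, y, z) = h (y, z, 1)" by (metis sym12 sym23)
      moreover have "h (0, Suc y, z) = h (Suc y, z, 0)" by (metis sym12 sym23)
      ultimately show ?thesis using b \<open>x = 0\<close> unfolding G_def by simp
    qed
  next
    case False
    show ?thesis
    proof (cases "y = 0")
      case True
      have b: "2 * h (x, Suc z, 0) \<le> h (Suc x, z, 0) + h (x, z, 1)" by (rule B2) (use asm in simp)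
      have "h (x, 0, Suc z) = h (x, Suc z, 0)" by (metis sym23)
      moreover have "h (x, 1, z) = h (x, z, 1)" by (metis sym23)
      moreover have "h (Suc x, 0, z) = h (Suc x, z, 0)" by (metis sym23)
      ultimately show ?thesis using b \<open>y = 0\<close> unfolding G_def by simp
    next
      case False
      obtain x' where x: "x = Suc x'" using \<open>x \<noteq> 0\<close> by (cases x) auto
      obtain y' where y: "y = Suc y'" using \<open>y \<noteq> 0\<close> by (cases y) auto
      obtain z' where z: "z = Suc z'" using asm by (cases z) auto
      have "G x' (Suc y') (Suc z') \<le> 0" by (rule IH2) (use asm x y z in auto)
      moreover have "G (Suc x') y' (Suc z') \<le> 0" by (rule IH2) (use asm x y z in auto)
      moreover have "G (Suc x') (Suc y') z' \<le> 0" by (rule IH2) (use asm x y z in auto)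
      ultimately show ?thesis unfolding x y z G_rec by simp
    qed
  qed
  show ?case
  proof (intro conjI impI)
    assume a: "z \<le> x \<and> z \<le> y"
    show "0 \<le> G x y z"
    proof (cases "z < x \<and> z < y")
      case True then show ?thesis using SI less.prems by blast
    next
      case False
      show ?thesis
      proof (cases "z = x")
        case True
        show ?thesis
        proof (cases "y = x")
          case True then show ?thesis using \<open>z = x\<close> G_T0 by simp
        next
          case False
          have "G x x y \<le> 0" by (rule SII) (use less.prems a \<open>z = x\<close> False in auto)
          then show ?thesis using G_T1[of x y] \<open>z = x\<close> by simp
        qed
      next
        case False
        then have zy: "z = y" "y < x" using a \<open>\<not> (z < x \<and> z < y)\<close> by auto
        have "G y y x \<le> 0" by (rule SII) (use less.prems zy in auto)
        then show ?thesis using G_T2[of x y] zy by simp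
      qed
    qed
  next
    assume a: "x \<le> z \<and> y \<le> z"
    show "G x y z \<le> 0"
    proof (cases "x < z \<and> y < z")
      case True then show ?thesis using SII less.prems by blast
    next
      case False
      show ?thesis
      proof (cases "z = x")
        case True
        show ?thesis
        proof (cases "y = x")
          case True then show ?thesis using \<open>z = x\<close> G_T0 by simp
        next
          case False
          have "0 \<le> G x x y" by (rule SI) (use less.prems a \<open>z = x\<close> False in auto)
          then show ?thesis using G_T1[of x y] \<open>z = x\<close> by simp
        qed
      next
        case False
        then have zy: "z = y" "x < y" using a \<open>\<not> (x < z \<and> y < z)\<close> by auto
        have "0 \<le> G y y x" by (rule SI) (use less.prems zy in auto)
        then show ?thesis using G_T2[of x y] zy by simp
      qed
    qed
  qed
qed

theorem lemma4:
  fixes l s :: nat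
  assumes "l > s"
  shows "h (l, l, s + 1) \<ge> h (l + 1, l, s)"
proof -
  have "0 \<le> G l l s" using main[of l l s "l+l+s"] assms by simp
  moreover have "h (l, Suc l, s) = h (Suc l, l, s)" by (rule sym12)
  ultimately show ?thesis unfolding G_def by simp
qed

end
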